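(* Let $n\in\mathbb{N}$ and define $T_n$ on $L^2((0,\infty))$ by $$(T_nf)(x) := \frac{1}{x^n}\int_0^x\int_0^{t_1}\cdots\int_0^{t_{n-1}} f(u)\,du\,dt_{n-1}\cdots dt_1,\qquad x\in(0,\infty),\ f\in L^2((0,\infty)).$$ Then $T_n$ is a bounded linear operator on $L^2((0,\infty))$ with norm $\|T_n\| = 2^n/(2n-1)!!$.
   Context: $(2n-1)!!=(2n-1)(2n-3)\cdots 3\cdot 1$. *)

theory Defs
  imports "HOL-Analysis.Analysis"
begin

fun dfact :: "nat \<Rightarrow> nat" where
  "dfact 0 = 1"
| "dfact (Suc 0) = 1"
| "dfact (Suc (Suc m)) = Suc (Suc m) * dfact m"

definition L2pos :: "(real \<Rightarrow> real) set" where
  "L2pos = {f. set_borel_measurable lborel {0<..} f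
               \<and> set_integrable lborel {0<..} (\<lambda>x. (f x)^2)}"

definition L2norm :: "(real \<Rightarrow> real) \<Rightarrow> real" where
  "L2norm f = sqrt (LINT x:{0<..}|lborel. (f x)^2)"

fun iter_int :: "nat \<Rightarrow> (real \<Rightarrow> real) \<Rightarrow> real \<Rightarrow> real" where
  "iter_int 0 f = f"
| "iter_int (Suc k) f = (\<lambda>x. LINT t:{0<..x}|lborel. iter_int k f t)"

definition T_op :: "nat \<Rightarrow> (real \<Rightarrow> real) \<Rightarrow> real \<Rightarrow> real" where
  "T_op n f x = iter_int n f x / x ^ n"

end

theory Submission
  imports Defs
begin

lemma L2pos_meas:
  assumes "g \<in> L2pos"
  shows "(\<lambda>t. indicator {0<..} t * g t) \<in> borel_measurable lborel"
  using assms unfolding L2pos_def set_borel_measurable_def by simp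

lemma L2pos_int:
  assumes "g \<in> L2pos"
  shows "integrable lborel (\<lambda>t. indicator {0<..} t * (g t)^2)"
  using assms unfolding L2pos_def set_integrable_def by simp

lemma abs_le_1_sq: "\<bar>y::real\<bar> \<le> 1 + y^2"
proof (cases "\<bar>y\<bar> \<le> 1")
  case True then show ?thesis by (simp add: add_increasing2)
next
  case False then have "\<bar>y\<bar> * 1 \<le> \<bar>y\<bar> * \<bar>y\<bar>" by (intro mult_left_mono) auto
  also have "\<bar>y\<bar> * \<bar>y\<bar> = y^2" by (simp add: power2_eq_square abs_mult_self_eq)
  finally show ?thesis by simp
qed

lemma LI:
  assumes g: "g \<in> L2pos" and x: "x > 0"
  shows "set_integrable lborel {0<..x} (\<lambda>t. t^k * g t)"
proof -
  define gg where "gg = (\<lambda>t. indicator {0<..} t * g t)"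
  have ggm[measurable]: "gg \<in> borel_measurable lborel" using L2pos_meas[OF g] by (simp add: gg_def)
  have eq: "(\<lambda>t. indicator {0<..x} t *\<^sub>R (t^k * g t)) = (\<lambda>t. indicator {0<..x} t * t^k * gg t)"
    by (auto simp: gg_def indicator_def fun_eq_iff)
  have bi: "integrable lborel (\<lambda>t. x^k * (indicator {0<..x} t + indicator {0<..} t * (g t)^2))"
    using L2pos_int[OF g] x by (intro integrable_mult_right integrable_add integrable_real_indicator) auto
  have "integrable lborel (\<lambda>t. indicator {0<..x} t * t^k * gg t)"
  proof (rule Bochner_Integration.integrable_bound[OF bi])
    show "(\<lambda>t. indicator {0<..x} t * t^k * gg t) \<in> borel_measurable lborel" by measurable
    show "AE t in lborel. norm (indicator {0<..x} t * t^k * gg t) \<le> norm (x^k * (indicator {0<..x} t + indicator {0<..} t * (g t)^2))"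
    proof (rule AE_I2)
      fix t :: real
      show "norm (indicator {0<..x} t * t^k * gg t) \<le> norm (x^k * (indicator {0<..x} t + indicator {0<..} t * (g t)^2))"
      proof (cases "t \<in> {0<..x}")
        case True
        then have "t^k \<le> x^k" by (intro power_mono) auto
        moreover have "\<bar>g t\<bar> \<le> 1 + (g t)^2" by (rule abs_le_1_sq)
        ultimately have "t^k * \<bar>g t\<bar> \<le> x^k * (1 + (g t)^2)" using True
          by (intro mult_mono) auto
        then show ?thesis using True x by (simp add: gg_def abs_mult)
      qed (simp add: gg_def)
    qed
  qed
  then show ?thesis unfolding set_integrable_def eq .
qed

lemma nn_pow0:
  fixes a x :: real
  assumes "a > -1" "x > 0"
  shows "(\<integral>\<^sup>+t. ennreal (indicator {0<..x} t * t powr a) \<partial>lborel) = ennreal (x powr (a+1)/(a+1))"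
proof -
  have "((\<lambda>t. t powr a) has_integral (x powr (a+1)/(a+1))) {0..x}"
    using has_integral_powr_from_0[of a x] assms by simp
  then have "((\<lambda>t. t powr a) has_integral (x powr (a+1)/(a+1))) {0<..x}"
    by (rule has_integral_spike_set_eq[THEN iffD1, rotated -1])
       (auto intro: negligible_subset[of "{0}"])
  from nn_integral_has_integral_lebesgue[OF _ this] show ?thesis by simp
qed
lemma nn_powinf:
  fixes e a :: real
  assumes "e < -1" "a > 0"
  shows "(\<integral>\<^sup>+x. ennreal (indicator {a..} x * x powr e) \<partial>lborel) = ennreal (-(a powr (e+1)) / (e+1))"
proof -
  have "((\<lambda>t. t powr e) has_integral (-(a powr (e+1)) / (e+1))) {a..}"
    using has_integral_powr_to_inf[OF assms] by simp
  from nn_integral_has_integral_lebesgue[OF _ this] show ?thesis using assms by simp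
qed

lemma powr_sq: "(t::real) > 0 \<Longrightarrow> (t powr a)^2 = t powr (2*a)"
  by (simp add: power2_eq_square powr_add[symmetric])
lemma powr_mult3: "(t::real) > 0 \<Longrightarrow> t powr a * (t powr b * c) = t powr (a+b) * c"
  by (simp add: powr_add)

lemma hardy_pointwise:
  fixes g :: "real \<Rightarrow> real" and k :: nat and x :: real
  assumes g: "g \<in> L2pos" and x: "x > 0"
  shows "ennreal ((LINT t:{0<..x}|lborel. t^k * g t)^2) \<le>
     ennreal (x powr (real k + 1/2) / (real k + 1/2)) *
     (\<integral>\<^sup>+t. ennreal (indicator {0<..x} t * t powr (real k + 1/2) * (indicator {0<..} t * g t)^2) \<partial>lborel)"
proof -
  define gg where "gg = (\<lambda>t. indicator {0<..} t * g t)"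
  have ggm[measurable]: "gg \<in> borel_measurable lborel" using L2pos_meas[OF g] by (simp add: gg_def)
  define u where "u = (\<lambda>t. ennreal (indicator {0<..x} t * t powr (real k/2 - 1/4)))"
  define v where "v = (\<lambda>t. ennreal (indicator {0<..x} t * t powr (real k/2 + 1/4) * \<bar>gg t\<bar>))"
  have um[measurable]: "u \<in> borel_measurable lborel" unfolding u_def by measurable
  have vm[measurable]: "v \<in> borel_measurable lborel" unfolding v_def by measurable
  have int: "integrable lborel (\<lambda>t. indicator {0<..x} t *\<^sub>R (t^k * g t))"
    using LI[OF g x, of k] unfolding set_integrable_def .
  have "ennreal \<bar>LINT t:{0<..x}|lborel. t^k * g t\<bar> \<le> (\<integral>\<^sup>+t. norm (indicator {0<..x} t *\<^sub>R (t^k * g t)) \<partial>lborel)"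
    unfolding set_lebesgue_integral_def using integral_norm_bound_ennreal[OF int] by simp
  also have "\<dots> = (\<integral>\<^sup>+t. u t * v t \<partial>lborel)"
  proof (rule nn_integral_cong)
    fix t :: real
    show "ennreal (norm (indicator {0<..x} t *\<^sub>R (t^k * g t))) = u t * v t"
    proof (cases "t \<in> {0<..x}")
      case True
      then have t: "t > 0" by simp
      have "t powr (real k/2 - 1/4) * (t powr (real k/2 + 1/4) * \<bar>g t\<bar>) = t powr (real k) * \<bar>g t\<bar>"
        using t by (simp add: powr_mult3)
      also have "\<dots> = t^k * \<bar>g t\<bar>" using t by (simp add: powr_realpow)
      finally have e: "t powr (real k/2 - 1/4) * (t powr (real k/2 + 1/4) * \<bar>g t\<bar>) = t^k * \<bar>g t\<bar>" .
      show ?thesis using True t unfolding u_def v_def gg_def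
        by (simp add: ennreal_mult[symmetric] abs_mult e)
    qed (simp add: u_def v_def)
  qed
  finally have A: "ennreal \<bar>LINT t:{0<..x}|lborel. t^k * g t\<bar> \<le> (\<integral>\<^sup>+t. u t * v t \<partial>lborel)" .
  have u2: "(\<integral>\<^sup>+t. u t ^ 2 \<partial>lborel) = ennreal (x powr (real k + 1/2) / (real k + 1/2))"
  proof -
    have "(\<integral>\<^sup>+t. u t ^ 2 \<partial>lborel) = (\<integral>\<^sup>+t. ennreal (indicator {0<..x} t * t powr (real k - 1/2)) \<partial>lborel)"
    proof (rule nn_integral_cong)
      fix t :: real
      show "u t ^ 2 = ennreal (indicator {0<..x} t * t powr (real k - 1/2))"
      proof (cases "t \<in> {0<..x}")
        case True
        then have "(t powr (real k/2 - 1/4))^2 = t powr (2*(real k/2 - 1/4))"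
          by (simp add: powr_sq)
        also have "2*(real k/2 - 1/4) = real k - 1/2" by simp
        finally have "(t powr (real k/2 - 1/4))^2 = t powr (real k - 1/2)" .
        then show ?thesis using True by (simp add: u_def ennreal_power)
      qed (simp add: u_def)
    qed
    also have "\<dots> = ennreal (x powr (real k - 1/2 + 1) / (real k - 1/2 + 1))"
      by (rule nn_pow0) (use x in auto)
    finally show ?thesis by (simp add: algebra_simps)
  qed
  have v2: "(\<integral>\<^sup>+t. v t ^ 2 \<partial>lborel) = (\<integral>\<^sup>+t. ennreal (indicator {0<..x} t * t powr (real k + 1/2) * (indicator {0<..} t * g t)^2) \<partial>lborel)"
  proof (rule nn_integral_cong)
    fix t :: real
    show "v t ^ 2 = ennreal (indicator {0<..x} t * t powr (real k + 1/2) * (indicator {0<..} t * g t)^2)"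
    proof (cases "t \<in> {0<..x}")
      case True
      then have "(t powr (real k/2 + 1/4) * \<bar>g t\<bar>)^2 = t powr (2*(real k/2 + 1/4)) * (g t)^2"
        by (simp add: power_mult_distrib powr_sq)
      also have "2*(real k/2 + 1/4) = real k + 1/2" by simp
      finally have "(t powr (real k/2 + 1/4) * \<bar>g t\<bar>)^2 = t powr (real k + 1/2) * (g t)^2" .
      then show ?thesis using True by (simp add: v_def gg_def ennreal_power)
    qed (simp add: v_def)
  qed
  have "ennreal ((LINT t:{0<..x}|lborel. t^k * g t)^2) = (ennreal \<bar>LINT t:{0<..x}|lborel. t^k * g t\<bar>)^2"
    by (simp add: ennreal_power)
  also have "\<dots> \<le> (\<integral>\<^sup>+t. u t * v t \<partial>lborel)^2"
    using A by (rule power_mono) simp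
  also have "\<dots> \<le> (\<integral>\<^sup>+t. u t ^ 2 \<partial>lborel) * (\<integral>\<^sup>+t. v t ^ 2 \<partial>lborel)"
    by (rule Cauchy_Schwarz_nn_integral) measurable
  finally show ?thesis unfolding u2 v2 .
qed


lemma G_meas:
  assumes g: "g \<in> L2pos"
  shows "(\<lambda>x. LINT t:{0<..x}|lborel. t^k * g t) \<in> borel_measurable lborel"
proof -
  define gg where "gg = (\<lambda>t. indicator {0<..} t * g t)"
  have ggm[measurable]: "gg \<in> borel_measurable lborel" using L2pos_meas[OF g] by (simp add: gg_def)
  have eq: "(\<lambda>x. LINT t:{0<..x}|lborel. t^k * g t) = (\<lambda>x. integral\<^sup>L lborel (\<lambda>t. if 0 < t \<and> t \<le> x then t^k * gg t else 0))"
    unfolding set_lebesgue_integral_def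
    by (intro ext Bochner_Integration.integral_cong) (auto simp: gg_def indicator_def)
  show ?thesis unfolding eq by measurable
qed


lemma hardy:
  fixes g :: "real \<Rightarrow> real" and k :: nat
  assumes g: "g \<in> L2pos"
  defines "h \<equiv> (\<lambda>x. (LINT t:{0<..x}|lborel. t^k * g t) / x^(Suc k))"
  shows "h \<in> L2pos \<and> L2norm h \<le> 2 / (2 * real k + 1) * L2norm g"
proof -
  define G where "G = (\<lambda>x. LINT t:{0<..x}|lborel. t^k * g t)"
  define gg where "gg = (\<lambda>t. indicator {0<..} t * g t)"
  define c where "c = 1 / (real k + 1/2)"
  define Ig where "Ig = integral\<^sup>L lborel (\<lambda>x. indicator {0<..} x * (g x)^2)"
  have c0: "c > 0" by (simp add: c_def)
  have Ig0: "Ig \<ge> 0" unfolding Ig_def by (intro integral_nonneg_AE) auto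
  have ggm[measurable]: "gg \<in> borel_measurable lborel" using L2pos_meas[OF g] by (simp add: gg_def)
  have Gm[measurable]: "G \<in> borel_measurable lborel" using G_meas[OF g] by (simp add: G_def)
  have hG: "h = (\<lambda>x. G x / x^(Suc k))" by (simp add: h_def G_def)
  have hm[measurable]: "h \<in> borel_measurable lborel" unfolding hG by measurable
  define F where "F = (\<lambda>x t. ennreal (if 0 < x \<and> 0 < t \<and> t \<le> x then x powr (- real k - 3/2) * (t powr (real k + 1/2) * (gg t)^2) else 0))"
  have Fm[measurable]: "(\<lambda>(x,t). F x t) \<in> borel_measurable (lborel \<Otimes>\<^sub>M lborel)"
    unfolding F_def by measurable
  have S1: "(\<integral>\<^sup>+x. ennreal (indicator {0<..} x * (h x)^2) \<partial>lborel) \<le> (\<integral>\<^sup>+x. ennreal c * (\<integral>\<^sup>+t. F x t \<partial>lborel) \<partial>lborel)"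
  proof (rule nn_integral_mono)
    fix x :: real
    show "ennreal (indicator {0<..} x * (h x)^2) \<le> ennreal c * (\<integral>\<^sup>+t. F x t \<partial>lborel)"
    proof (cases "x > 0")
      case False then show ?thesis by simp
    next
      case x: True
      define I where "I = (\<integral>\<^sup>+t. ennreal (indicator {0<..x} t * t powr (real k + 1/2) * (gg t)^2) \<partial>lborel)"
      have xp: "x^(2*k+2) = x powr (real (2*k+2))" using x by (rule powr_realpow[symmetric])
      have ar: "x powr (real k + 1/2) / (real k + 1/2) * (1 / x^(2*k+2)) = c * x powr (- real k - 3/2)"
        unfolding xp c_def using x by (simp add: powr_diff[symmetric] field_simps, intro arg_cong[where f="\<lambda>e. x powr e"], simp)
      have pw: "(x^Suc k)^2 = x^(2*k+2)"
      proof -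
        have "(x^Suc k)^2 = x^(Suc k * 2)" by (rule power_mult[symmetric])
        also have "Suc k * 2 = 2*k+2" by simp
        finally show ?thesis .
      qed
      have "indicator {0<..} x * (h x)^2 = (G x)^2 / (x^Suc k)^2"
        using x by (simp add: hG power_divide)
      also have "\<dots> = (G x)^2 * (1 / x^(2*k+2))" unfolding pw by simp
      also have "ennreal \<dots> = ennreal ((G x)^2) * ennreal (1 / x^(2*k+2))"
        by (rule ennreal_mult) (use x in auto)
      finally have "ennreal (indicator {0<..} x * (h x)^2) = ennreal ((G x)^2) * ennreal (1 / x^(2*k+2))" .
      also have "\<dots> \<le> ennreal (x powr (real k + 1/2) / (real k + 1/2)) * I * ennreal (1 / x^(2*k+2))"
        using hardy_pointwise[OF g x, of k] by (intro mult_right_mono) (simp_all add: G_def I_def gg_def)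
      also have "\<dots> = ennreal c * (ennreal (x powr (- real k - 3/2)) * I)"
        using x c0 by (simp add: ennreal_mult[symmetric] ar[symmetric] mult_ac)
      also have "ennreal (x powr (- real k - 3/2)) * I = (\<integral>\<^sup>+t. F x t \<partial>lborel)"
      proof -
        have "(\<integral>\<^sup>+t. F x t \<partial>lborel) = (\<integral>\<^sup>+t. ennreal (x powr (- real k - 3/2)) * ennreal (indicator {0<..x} t * t powr (real k + 1/2) * (gg t)^2) \<partial>lborel)"
          using x by (intro nn_integral_cong) (auto simp: F_def indicator_def ennreal_mult[symmetric])
        also have "\<dots> = ennreal (x powr (- real k - 3/2)) * I"
          unfolding I_def by (rule nn_integral_cmult) measurable
        finally show ?thesis by simp
      qed
      finally show ?thesis .
    qed
  qed
  have S2: "(\<integral>\<^sup>+x. ennreal c * (\<integral>\<^sup>+t. F x t \<partial>lborel) \<partial>lborel) = ennreal c * (\<integral>\<^sup>+x. (\<integral>\<^sup>+t. F x t \<partial>lborel) \<partial>lborel)"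
    by (rule nn_integral_cmult) measurable
  have S3: "(\<integral>\<^sup>+x. (\<integral>\<^sup>+t. F x t \<partial>lborel) \<partial>lborel) = (\<integral>\<^sup>+t. (\<integral>\<^sup>+x. F x t \<partial>lborel) \<partial>lborel)"
    by (rule lborel_pair.Fubini'[symmetric]) (rule Fm)
  have S4: "(\<integral>\<^sup>+x. F x t \<partial>lborel) = ennreal c * ennreal (indicator {0<..} t * (g t)^2)" for t
  proof (cases "t > 0")
    case False then show ?thesis by (simp add: F_def)
  next
    case t: True
    have "(\<integral>\<^sup>+x. F x t \<partial>lborel) = (\<integral>\<^sup>+x. ennreal (t powr (real k + 1/2) * (gg t)^2) * ennreal (indicator {t..} x * x powr (- real k - 3/2)) \<partial>lborel)"
      using t by (intro nn_integral_cong) (auto simp: F_def indicator_def ennreal_mult[symmetric])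
    also have "\<dots> = ennreal (t powr (real k + 1/2) * (gg t)^2) * (\<integral>\<^sup>+x. ennreal (indicator {t..} x * x powr (- real k - 3/2)) \<partial>lborel)"
      by (rule nn_integral_cmult) measurable
    also have "(\<integral>\<^sup>+x. ennreal (indicator {t..} x * x powr (- real k - 3/2)) \<partial>lborel) = ennreal (-(t powr (- real k - 3/2 + 1)) / (- real k - 3/2 + 1))"
      by (rule nn_powinf) (use t in auto)
    also have "- real k - 3/2 + 1 = - (real k + 1/2)" by simp
    also have "ennreal (t powr (real k + 1/2) * (gg t)^2) * ennreal (-(t powr (- (real k + 1/2))) / (- (real k + 1/2)))
        = ennreal (c * (t powr (real k + 1/2) * t powr (- (real k + 1/2))) * (gg t)^2)"
      using t by (simp add: ennreal_mult[symmetric] c_def field_simps)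
    also have "t powr (real k + 1/2) * t powr (- (real k + 1/2)) = 1"
      using t by (simp add: powr_add[symmetric])
    finally show ?thesis using t c0 by (simp add: gg_def ennreal_mult[symmetric])
  qed
  have intg: "integrable lborel (\<lambda>x. indicator {0<..} x * (g x)^2)" using L2pos_int[OF g] .
  have S5: "(\<integral>\<^sup>+t. ennreal c * ennreal (indicator {0<..} t * (g t)^2) \<partial>lborel) = ennreal c * ennreal Ig"
  proof -
    have m[measurable]: "(\<lambda>t. indicator {0<..} t * (g t)^2) \<in> borel_measurable lborel"
      using intg by (rule borel_measurable_integrable)
    have e: "(\<integral>\<^sup>+t. ennreal (indicator {0<..} t * (g t)^2) \<partial>lborel) = ennreal Ig"
      unfolding Ig_def by (rule nn_integral_eq_integral[OF intg]) auto
    have "(\<integral>\<^sup>+t. ennreal c * ennreal (indicator {0<..} t * (g t)^2) \<partial>lborel) = ennreal c * (\<integral>\<^sup>+t. ennreal (indicator {0<..} t * (g t)^2) \<partial>lborel)"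
      by (rule nn_integral_cmult) measurable
    then show ?thesis unfolding e .
  qed
  have tot: "(\<integral>\<^sup>+x. ennreal (indicator {0<..} x * (h x)^2) \<partial>lborel) \<le> ennreal (c^2 * Ig)"
    using S1 unfolding S2 S3 S4 S5 using c0 Ig0 by (simp add: ennreal_mult[symmetric] power2_eq_square mult_ac)
  have inth: "integrable lborel (\<lambda>x. indicator {0<..} x * (h x)^2)"
  proof (rule integrableI_bounded)
    show "(\<lambda>x. indicator {0<..} x * (h x)^2) \<in> borel_measurable lborel" by measurable
    have "(\<integral>\<^sup>+x. ennreal (norm (indicator {0<..} x * (h x)^2)) \<partial>lborel) = (\<integral>\<^sup>+x. ennreal (indicator {0<..} x * (h x)^2) \<partial>lborel)"
      by (intro nn_integral_cong) (simp add: indicator_def)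
    also have "\<dots> < \<infinity>" using tot by (simp add: le_less_trans)
    finally show "(\<integral>\<^sup>+x. ennreal (norm (indicator {0<..} x * (h x)^2)) \<partial>lborel) < \<infinity>" .
  qed
  have hL: "h \<in> L2pos"
    unfolding L2pos_def set_borel_measurable_def set_integrable_def using inth by simp
  define Ih where "Ih = integral\<^sup>L lborel (\<lambda>x. indicator {0<..} x * (h x)^2)"
  have "ennreal Ih = (\<integral>\<^sup>+x. ennreal (indicator {0<..} x * (h x)^2) \<partial>lborel)"
    unfolding Ih_def by (rule nn_integral_eq_integral[symmetric]) (auto intro: inth)
  with tot have "ennreal Ih \<le> ennreal (c^2 * Ig)" by simp
  then have IhIg: "Ih \<le> c^2 * Ig" using c0 Ig0 by (simp add: ennreal_le_iff)
  have "L2norm h = sqrt Ih" unfolding L2norm_def Ih_def set_lebesgue_integral_def by simp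
  also have "\<dots> \<le> sqrt (c^2 * Ig)" using IhIg by simp
  also have "\<dots> = c * L2norm g" using c0 unfolding L2norm_def Ig_def set_lebesgue_integral_def
    by (simp add: real_sqrt_mult)
  also have "c = 2 / (2 * real k + 1)" by (simp add: c_def field_simps)
  finally show ?thesis using hL by simp
qed


lemma T_op_0: "T_op 0 f = f"
  by (simp add: T_op_def fun_eq_iff)

lemma T_op_Suc: "T_op (Suc k) f = (\<lambda>x. (LINT t:{0<..x}|lborel. t^k * T_op k f t) / x^(Suc k))"
proof
  fix x :: real
  have "(LINT t:{0<..x}|lborel. iter_int k f t) = (LINT t:{0<..x}|lborel. t^k * T_op k f t)"
    by (rule set_lebesgue_integral_cong) (auto simp: T_op_def)
  then show "T_op (Suc k) f x = (LINT t:{0<..x}|lborel. t^k * T_op k f t) / x^(Suc k)"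
    by (simp add: T_op_def)
qed

lemma bound_ind:
  "\<forall>f\<in>L2pos. T_op n f \<in> L2pos \<and> L2norm (T_op n f) \<le> (\<Prod>j\<in>{1..n}. 2 / (2 * real j - 1)) * L2norm f"
proof (induction n)
  case 0 then show ?case by (simp add: T_op_0)
next
  case (Suc k)
  show ?case
  proof
    fix f assume f: "f \<in> L2pos"
    from Suc f have IH: "T_op k f \<in> L2pos" "L2norm (T_op k f) \<le> (\<Prod>j\<in>{1..k}. 2 / (2 * real j - 1)) * L2norm f"
      by auto
    from hardy[OF IH(1), of k] have H: "T_op (Suc k) f \<in> L2pos"
      "L2norm (T_op (Suc k) f) \<le> 2 / (2 * real k + 1) * L2norm (T_op k f)"
      unfolding T_op_Suc[symmetric] by auto
    have "L2norm (T_op (Suc k) f) \<le> 2 / (2 * real k + 1) * ((\<Prod>j\<in>{1..k}. 2 / (2 * real j - 1)) * L2norm f)"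
    proof -
      have "2 / (2 * real k + 1) * L2norm (T_op k f) \<le> 2 / (2 * real k + 1) * ((\<Prod>j\<in>{1..k}. 2 / (2 * real j - 1)) * L2norm f)"
        using IH(2) by (intro mult_left_mono) auto
      then show ?thesis using H(2) by linarith
    qed
    also have "\<dots> = (\<Prod>j\<in>{1..Suc k}. 2 / (2 * real j - 1)) * L2norm f"
      by (simp add: prod.nat_ivl_Suc' mult_ac)
    finally show "T_op (Suc k) f \<in> L2pos \<and> L2norm (T_op (Suc k) f) \<le> (\<Prod>j\<in>{1..Suc k}. 2 / (2 * real j - 1)) * L2norm f"
      using H(1) by simp
  qed
qed

lemma dfact_prod: "real (dfact (2 * n - 1)) = (\<Prod>j\<in>{1..n}. 2 * real j - 1)"
proof (induction n)
  case 0 then show ?case by simp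
next
  case (Suc n)
  have "dfact (2 * Suc n - 1) = (2 * n + 1) * dfact (2 * n - 1)"
  proof (cases n)
    case 0 then show ?thesis by simp
  next
    case (Suc m)
    then have "2 * Suc n - 1 = Suc (Suc (2 * n - 1))" by simp
    then show ?thesis using Suc by simp
  qed
  then show ?case using Suc.IH by (simp add: prod.nat_ivl_Suc' algebra_simps)
qed

lemma const_eq: "(\<Prod>j\<in>{1..n}. 2 / (2 * real j - 1)) = 2 ^ n / real (dfact (2 * n - 1))"
  unfolding dfact_prod by (simp add: prod_dividef)

lemma const_eq2: "1 / (\<Prod>j\<in>{1..n}. real j - 1/2) = 2 ^ n / real (dfact (2 * n - 1))"
proof -
  have "(\<Prod>j\<in>{1..n}. real j - 1/2) = (\<Prod>j\<in>{1..n}. (2 * real j - 1) / 2)"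
    by (intro prod.cong) (auto simp: field_simps)
  also have "\<dots> = real (dfact (2 * n - 1)) / 2 ^ n"
    unfolding dfact_prod by (simp add: prod_dividef)
  finally show ?thesis by simp
qed

lemma linear_iter:
  assumes f: "f \<in> L2pos" and g: "g \<in> L2pos"
  shows "\<forall>x>0. iter_int k (\<lambda>y. a * f y + b * g y) x = a * iter_int k f x + b * iter_int k g x"
proof (induction k)
  case 0 then show ?case by simp
next
  case (Suc k)
  show ?case
  proof (intro allI impI)
    fix x :: real assume x: "x > 0"
    have if_: "set_integrable lborel {0<..x} (iter_int k f)"
    proof -
      have "set_integrable lborel {0<..x} (\<lambda>t. t^k * T_op k f t)"
        using LI[OF conjunct1[OF bound_ind[rule_format, OF f]] x] .
      then show ?thesis
        by (rule set_integrable_cong[THEN iffD1, rotated -1]) (auto simp: T_op_def)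
    qed
    have ig: "set_integrable lborel {0<..x} (iter_int k g)"
    proof -
      have "set_integrable lborel {0<..x} (\<lambda>t. t^k * T_op k g t)"
        using LI[OF conjunct1[OF bound_ind[rule_format, OF g]] x] .
      then show ?thesis
        by (rule set_integrable_cong[THEN iffD1, rotated -1]) (auto simp: T_op_def)
    qed
    have "iter_int (Suc k) (\<lambda>y. a * f y + b * g y) x = (LINT t:{0<..x}|lborel. a * iter_int k f t + b * iter_int k g t)"
      using Suc by (simp, intro set_lebesgue_integral_cong) auto
    also have "\<dots> = a * (LINT t:{0<..x}|lborel. iter_int k f t) + b * (LINT t:{0<..x}|lborel. iter_int k g t)"
      using if_ ig by (simp add: set_integral_add set_integrable_mult_right set_integral_mult_right)
    finally show "iter_int (Suc k) (\<lambda>y. a * f y + b * g y) x = a * iter_int (Suc k) f x + b * iter_int (Suc k) g x"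
      by simp
  qed
qed


lemma lint_pow0:
  fixes a x :: real
  assumes "a > -1" "x > 0"
  shows "(LINT t:{0<..x}|lborel. t powr a) = x powr (a+1)/(a+1)"
proof -
  have "(LINT t:{0<..x}|lborel. t powr a) = integral\<^sup>L lborel (\<lambda>t. indicator {0<..x} t * t powr a)"
    unfolding set_lebesgue_integral_def by simp
  also have "\<dots> = enn2real (\<integral>\<^sup>+t. ennreal (indicator {0<..x} t * t powr a) \<partial>lborel)"
    by (rule integral_eq_nn_integral) auto
  also have "\<dots> = x powr (a+1)/(a+1)"
    unfolding nn_pow0[OF assms] using assms by simp
  finally show ?thesis .
qed

definition fb :: "real \<Rightarrow> real \<Rightarrow> real" where
  "fb \<beta> = (\<lambda>x. if 0 < x \<and> x \<le> 1 then x powr (-\<beta>) else 0)"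

definition Pb :: "real \<Rightarrow> nat \<Rightarrow> real" where
  "Pb \<beta> k = (\<Prod>j\<in>{1..k}. real j - \<beta>)"

lemma Pb_pos: "\<beta> < 1 \<Longrightarrow> Pb \<beta> k > 0"
  unfolding Pb_def by (intro prod_pos) auto

lemma iter_fb:
  assumes b: "0 \<le> \<beta>" "\<beta> < 1/2"
  shows "\<forall>x. 0 < x \<and> x \<le> 1 \<longrightarrow> iter_int k (fb \<beta>) x = x powr (real k - \<beta>) / Pb \<beta> k"
proof (induction k)
  case 0 then show ?case by (simp add: fb_def Pb_def)
next
  case (Suc k)
  show ?case
  proof (intro allI impI)
    fix x :: real assume x: "0 < x \<and> x \<le> 1"
    have "iter_int (Suc k) (fb \<beta>) x = (LINT t:{0<..x}|lborel. iter_int k (fb \<beta>) t)" by simp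
    also have "\<dots> = (LINT t:{0<..x}|lborel. t powr (real k - \<beta>) / Pb \<beta> k)"
      by (rule set_lebesgue_integral_cong) (use Suc x in auto)
    also have "\<dots> = (LINT t:{0<..x}|lborel. t powr (real k - \<beta>)) / Pb \<beta> k"
      unfolding set_lebesgue_integral_def by simp
    also have "\<dots> = x powr (real k - \<beta> + 1) / (real k - \<beta> + 1) / Pb \<beta> k"
      using x b by (subst lint_pow0) auto
    also have "\<dots> = x powr (real (Suc k) - \<beta>) / Pb \<beta> (Suc k)"
      by (simp add: Pb_def prod.nat_ivl_Suc' algebra_simps)
    finally show "iter_int (Suc k) (fb \<beta>) x = x powr (real (Suc k) - \<beta>) / Pb \<beta> (Suc k)" .
  qed
qed

lemma T_fb:
  assumes b: "0 \<le> \<beta>" "\<beta> < 1/2" and x: "0 < x" "x \<le> 1"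
  shows "T_op n (fb \<beta>) x = x powr (-\<beta>) / Pb \<beta> n"
proof -
  have "T_op n (fb \<beta>) x = x powr (real n - \<beta>) / Pb \<beta> n / x^n"
    using iter_fb[OF b, of n] x by (simp add: T_op_def)
  also have "x powr (real n - \<beta>) = x^n * x powr (-\<beta>)"
    using x by (simp add: powr_add[symmetric] powr_realpow[symmetric])
  finally show ?thesis using x by simp
qed

lemma fb_sq: "indicator {0<..} x * (fb \<beta> x)^2 = indicator {0<..1} x * x powr (-2*\<beta>)"
  by (auto simp: fb_def indicator_def powr_sq)

lemma fb_L2:
  assumes b: "0 \<le> \<beta>" "\<beta> < 1/2"
  shows "fb \<beta> \<in> L2pos" "L2norm (fb \<beta>) = sqrt (1 / (1 - 2*\<beta>))"
proof -
  have nn: "(\<integral>\<^sup>+x. ennreal (indicator {0<..1} x * x powr (-2*\<beta>)) \<partial>lborel) = ennreal (1 / (1 - 2*\<beta>))"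
    using nn_pow0[of "-2*\<beta>" 1] b by (simp add: algebra_simps)
  have int: "integrable lborel (\<lambda>x. indicator {0<..1} x * x powr (-2*\<beta>))"
    by (rule integrableI_nn_integral_finite[OF _ _ nn]) auto
  have ival: "integral\<^sup>L lborel (\<lambda>x. indicator {0<..1} x * x powr (-2*\<beta>)) = 1 / (1 - 2*\<beta>)"
    using nn_integral_eq_integral[OF int] nn b by simp
  show "fb \<beta> \<in> L2pos"
    unfolding L2pos_def set_borel_measurable_def set_integrable_def
    using int by (simp add: fb_sq del: indicator_simps) (simp add: fb_def)
  show "L2norm (fb \<beta>) = sqrt (1 / (1 - 2*\<beta>))"
    unfolding L2norm_def set_lebesgue_integral_def using ival by (simp add: fb_sq del: indicator_simps)
qed


lemma sharp_beta:
  assumes b: "0 \<le> \<beta>" "\<beta> < 1/2"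
    and K: "\<forall>f\<in>L2pos. L2norm (T_op n f) \<le> K * L2norm f"
  shows "1 / Pb \<beta> n \<le> K"
proof -
  define T where "T = T_op n (fb \<beta>)"
  define P where "P = Pb \<beta> n"
  define s where "s = sqrt (1 / (1 - 2*\<beta>))"
  have P0: "P > 0" unfolding P_def using b by (intro Pb_pos) auto
  have s0: "s > 0" unfolding s_def using b by simp
  have TL: "T \<in> L2pos" unfolding T_def using bound_ind fb_L2(1)[OF b] by blast
  have intT: "integrable lborel (\<lambda>x. indicator {0<..} x * (T x)^2)"
    using TL unfolding L2pos_def set_integrable_def by simp
  define IT where "IT = integral\<^sup>L lborel (\<lambda>x. indicator {0<..} x * (T x)^2)"
  have "ennreal (1 / P^2) * ennreal (1 / (1 - 2*\<beta>)) = ennreal (1 / P^2) * (\<integral>\<^sup>+x. ennreal (indicator {0<..1} x * x powr (-2*\<beta>)) \<partial>lborel)"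
    using nn_pow0[of "-2*\<beta>" 1] b by (simp add: algebra_simps)
  also have "\<dots> = (\<integral>\<^sup>+x. ennreal (1 / P^2) * ennreal (indicator {0<..1} x * x powr (-2*\<beta>)) \<partial>lborel)"
    by (rule nn_integral_cmult[symmetric]) measurable
  also have "\<dots> \<le> (\<integral>\<^sup>+x. ennreal (indicator {0<..} x * (T x)^2) \<partial>lborel)"
  proof (rule nn_integral_mono)
    fix x :: real
    show "ennreal (1 / P^2) * ennreal (indicator {0<..1} x * x powr (-2*\<beta>)) \<le> ennreal (indicator {0<..} x * (T x)^2)"
    proof (cases "0 < x \<and> x \<le> 1")
      case True
      then have "(T x)^2 = (x powr (-\<beta>))^2 / P^2" unfolding T_def P_def
        using T_fb[OF b] by (simp add: power_divide)
      also have "(x powr (-\<beta>))^2 = x powr (-2*\<beta>)" using True by (simp add: powr_sq)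
      finally show ?thesis using True P0 by (simp add: ennreal_mult[symmetric])
    qed auto
  qed
  also have "\<dots> = ennreal IT"
    unfolding IT_def by (rule nn_integral_eq_integral[OF intT]) auto
  finally have le: "ennreal (1 / P^2) * ennreal (1 / (1 - 2*\<beta>)) \<le> ennreal IT" .
  have "ennreal (1 / P^2) * ennreal (1 / (1 - 2*\<beta>)) = ennreal (1 / P^2 * (1 / (1 - 2*\<beta>)))"
    by (rule ennreal_mult[symmetric]) (use b in auto)
  with le have "ennreal (1 / P^2 * (1 / (1 - 2*\<beta>))) \<le> ennreal IT" by simp
  then have IT1: "1 / P^2 * (1 / (1 - 2*\<beta>)) \<le> IT"
  proof -
    have pp: "P^2 * (1 - 2*\<beta>) > 0" using P0 b by simp
    have "1 / P^2 * (1 / (1 - 2*\<beta>)) \<ge> 0" using P0 b by simp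
    then show ?thesis using \<open>ennreal (1 / P^2 * (1 / (1 - 2*\<beta>))) \<le> ennreal IT\<close>
      by (simp add: ennreal_le_iff2) (use P0 b in auto)
  qed
  have "s / P = sqrt (1 / P^2 * (1 / (1 - 2*\<beta>)))"
    using P0 by (simp add: s_def real_sqrt_mult real_sqrt_divide)
  also have "\<dots> \<le> sqrt IT" using IT1 by simp
  also have "sqrt IT = L2norm T" unfolding L2norm_def IT_def set_lebesgue_integral_def by simp
  also have "\<dots> \<le> K * s" using K fb_L2[OF b] unfolding T_def s_def by auto
  finally have "s / P \<le> K * s" .
  then have "s * (1 / P) \<le> s * K" by (simp add: mult_ac)
  then have "1 / P \<le> K" by (rule mult_left_le_imp_le) (use s0 in simp)
  then show ?thesis unfolding P_def .
qed

theorem theorem7p1: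
  fixes n :: nat
  assumes "n \<ge> 1"
  shows "(\<forall>f\<in>L2pos. T_op n f \<in> L2pos)
    \<and> (\<forall>f\<in>L2pos. \<forall>g\<in>L2pos. \<forall>a b::real. \<forall>x>0.
          T_op n (\<lambda>y. a * f y + b * g y) x = a * T_op n f x + b * T_op n g x)
    \<and> (\<forall>f\<in>L2pos. L2norm (T_op n f) \<le> (2 ^ n / real (dfact (2 * n - 1))) * L2norm f)
    \<and> (\<forall>K::real. (\<forall>f\<in>L2pos. L2norm (T_op n f) \<le> K * L2norm f)
          \<longrightarrow> 2 ^ n / real (dfact (2 * n - 1)) \<le> K)"
proof (intro conjI ballI allI impI)
  fix f assume "f \<in> L2pos"
  then show "T_op n f \<in> L2pos" using bound_ind by blast
next
  fix f g a b and x :: real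
  assume f: "f \<in> L2pos" and g: "g \<in> L2pos" and x: "x > 0"
  show "T_op n (\<lambda>y. a * f y + b * g y) x = a * T_op n f x + b * T_op n g x"
    using linear_iter[OF f g, of n a b] x by (simp add: T_op_def add_divide_distrib)
next
  fix f assume "f \<in> L2pos"
  then show "L2norm (T_op n f) \<le> (2 ^ n / real (dfact (2 * n - 1))) * L2norm f"
    using bound_ind const_eq by metis
next
  fix K :: real
  assume K: "\<forall>f\<in>L2pos. L2norm (T_op n f) \<le> K * L2norm f"
  have lim: "((\<lambda>\<beta>. 1 / (\<Prod>j\<in>{1..n}. real j - \<beta>)) \<longlongrightarrow> 1 / (\<Prod>j\<in>{1..n}. real j - 1/2)) (at_left (1/2::real))"
  proof (intro tendsto_intros)
    show "(\<Prod>j\<in>{1..n}. real j - 1/2) \<noteq> 0" by (subst prod_zero_iff) auto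
  qed
  have ev: "\<forall>\<^sub>F \<beta> in at_left (1/2::real). 1 / (\<Prod>j\<in>{1..n}. real j - \<beta>) \<le> K"
  proof (rule eventually_mono[OF eventually_at_left_real[of 0 "1/2::real"]])
    fix \<beta> :: real assume "\<beta> \<in> {0<..<1/2}"
    then show "1 / (\<Prod>j\<in>{1..n}. real j - \<beta>) \<le> K"
      using sharp_beta[OF _ _ K, of \<beta>] unfolding Pb_def by auto
  qed simp
  have "1 / (\<Prod>j\<in>{1..n}. real j - 1/2) \<le> K"
    by (rule tendsto_upperbound[OF lim ev]) simp
  then show "2 ^ n / real (dfact (2 * n - 1)) \<le> K" unfolding const_eq2 .
qed

end
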